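(* Let $a$ and $w$ be non-negative integers and let $f:\mathbb{N}\to\mathbb{N}$ be an arbitrary non-decreasing function. There exist integers $w_0$ and $n_0$ such that the following holds. If a graph $G$ has a proper path decomposition of interior width at most $w$, adhesion at most $a$, and order at least $n_0$, then for some $w'\le w_0$ and $p\le a$, $G$ also has a $p$-linked proper path decomposition of interior width at most $w'$ and order at least $f(w')$.
   Context: A path decomposition of a graph $G$ is a pair $(P,\beta)$ where $P$ is a path and $\beta$ assigns to each node of $P$ a subset (bag) of $V(G)$ such that every edge of $G$ has both ends in some bag and for every vertex $v$ the nodes whose bags contain $v$ form a non-empty subpath of $P$. Let $s,t$ be the first and last nodes of $P$. For a node $x\neq s$ let $l(x)$ be the preceding node and $L(x)=\beta(l(x))\cap\beta(x)$; for $x\neq t$ let $r(x)$ be the following node and $R(x)=\beta(r(x))\cap\beta(x)$. The decomposition is proper if $\beta(x)\not\subseteq\beta(y)$ for all distinct nodes $x,y$. Its interior width is the maximum of $|\beta(x)|-1$ over nodes $x\notin\{s,t\}$. Its adhesion is the maximum of $|\beta(x)\cap\beta(y)|$ over adjacent nodes $x,y$ of $P$. It is $p$-linked if $|L(x)|=p$ for all $x\neq s$ and $G$ contains $p$ pairwise vertex-disjoint paths from $R(s)$ to $L(t)$. Its order is $|V(P)|$. *)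

theory Defs
  imports Main
begin

text \<open>A finite (simple) graph with vertex set V and symmetric irreflexive
  edge relation E on V. Vertices are natural numbers (every finite graph is
  isomorphic to one of this form).\<close>
definition graph :: "nat set \<Rightarrow> (nat \<Rightarrow> nat \<Rightarrow> bool) \<Rightarrow> bool" where
  "graph V E \<longleftrightarrow> finite V \<and> (\<forall>u v. E u v \<longrightarrow> u \<in> V \<and> v \<in> V)
     \<and> (\<forall>u v. E u v \<longrightarrow> E v u) \<and> (\<forall>v. \<not> E v v)"

text \<open>A path decomposition is given by the list of bags along the path P:
  node i of P (for i < length B) carries the bag B ! i; consecutive indices
  are adjacent nodes; the first node s is 0 and the last node t is length B - 1.\<close>
definition path_decomp :: "nat set \<Rightarrow> (nat \<Rightarrow> nat \<Rightarrow> bool) \<Rightarrow> nat set list \<Rightarrow> bool" where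
  "path_decomp V E B \<longleftrightarrow> B \<noteq> [] \<and> (\<forall>i < length B. B ! i \<subseteq> V)
     \<and> (\<forall>u v. E u v \<longrightarrow> (\<exists>i < length B. u \<in> B ! i \<and> v \<in> B ! i))
     \<and> (\<forall>v \<in> V. (\<exists>i < length B. v \<in> B ! i)
          \<and> (\<forall>i j k. i \<le> j \<and> j \<le> k \<and> k < length B \<and> v \<in> B ! i \<and> v \<in> B ! k \<longrightarrow> v \<in> B ! j))"

definition proper_pd :: "nat set list \<Rightarrow> bool" where
  "proper_pd B \<longleftrightarrow> (\<forall>i < length B. \<forall>j < length B. i \<noteq> j \<longrightarrow> \<not> (B ! i \<subseteq> B ! j))"

definition interior_width_le :: "nat set list \<Rightarrow> nat \<Rightarrow> bool" where
  "interior_width_le B w \<longleftrightarrow> (\<forall>i. 0 < i \<and> i + 1 < length B \<longrightarrow> card (B ! i) \<le> w + 1)"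

definition adhesion_le :: "nat set list \<Rightarrow> nat \<Rightarrow> bool" where
  "adhesion_le B a \<longleftrightarrow> (\<forall>i. i + 1 < length B \<longrightarrow> card (B ! i \<inter> B ! (i + 1)) \<le> a)"

text \<open>L(x) for node x>0 and R(x) for node x < last.\<close>
definition Lset :: "nat set list \<Rightarrow> nat \<Rightarrow> nat set" where
  "Lset B i = B ! (i - 1) \<inter> B ! i"

definition Rset :: "nat set list \<Rightarrow> nat \<Rightarrow> nat set" where
  "Rset B i = B ! (i + 1) \<inter> B ! i"

definition gpath :: "nat set \<Rightarrow> (nat \<Rightarrow> nat \<Rightarrow> bool) \<Rightarrow> nat list \<Rightarrow> bool" where
  "gpath V E ps \<longleftrightarrow> ps \<noteq> [] \<and> distinct ps \<and> set ps \<subseteq> V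
     \<and> (\<forall>i. i + 1 < length ps \<longrightarrow> E (ps ! i) (ps ! (i + 1)))"

definition disjoint_paths :: "nat set \<Rightarrow> (nat \<Rightarrow> nat \<Rightarrow> bool) \<Rightarrow> nat \<Rightarrow> nat set \<Rightarrow> nat set \<Rightarrow> bool" where
  "disjoint_paths V E p X Y \<longleftrightarrow> (\<exists>Ps :: nat list list. length Ps = p
     \<and> (\<forall>k < p. gpath V E (Ps ! k) \<and> hd (Ps ! k) \<in> X \<and> last (Ps ! k) \<in> Y)
     \<and> (\<forall>k < p. \<forall>l < p. k \<noteq> l \<longrightarrow> set (Ps ! k) \<inter> set (Ps ! l) = {}))"

text \<open>p-linked: |L(x)| = p for all x \<noteq> s, and p disjoint paths from R(s) to L(t).
  Requires at least two nodes so that R(s) and L(t) are defined.\<close>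
definition p_linked :: "nat set \<Rightarrow> (nat \<Rightarrow> nat \<Rightarrow> bool) \<Rightarrow> nat set list \<Rightarrow> nat \<Rightarrow> bool" where
  "p_linked V E B p \<longleftrightarrow> 2 \<le> length B
     \<and> (\<forall>i. 0 < i \<and> i < length B \<longrightarrow> card (Lset B i) = p)
     \<and> disjoint_paths V E p (Rset B 0) (Lset B (length B - 1))"

end

theory Submission
  imports Defs
begin

definition sep :: "nat set \<Rightarrow> (nat \<Rightarrow> nat \<Rightarrow> bool) \<Rightarrow> nat set \<Rightarrow> nat set \<Rightarrow> bool" where
  "sep V E A B \<longleftrightarrow> A \<union> B = V \<and> (\<forall>u v. E u v \<longrightarrow> u \<in> A \<longrightarrow> u \<notin> B \<longrightarrow> v \<in> A)"

lemma sep_other: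
  assumes "graph V E" "sep V E A B" "E u v" "u \<in> B" "u \<notin> A"
  shows "v \<in> B"
proof (rule ccontr)
  assume "v \<notin> B"
  have "v \<in> V" using assms(1,3) unfolding graph_def by blast
  hence "v \<in> A" using assms(2) \<open>v \<notin> B\<close> unfolding sep_def by blast
  have "E v u" using assms(1,3) unfolding graph_def by blast
  hence "u \<in> A" using assms(2) \<open>v \<in> A\<close> \<open>v \<notin> B\<close> unfolding sep_def by blast
  thus False using assms(5) by blast
qed

definition chain :: "nat set \<Rightarrow> (nat \<Rightarrow> nat \<Rightarrow> bool) \<Rightarrow> nat \<Rightarrow> (nat \<Rightarrow> nat set) \<Rightarrow> (nat \<Rightarrow> nat set) \<Rightarrow> bool" where
  "chain V E m L R \<longleftrightarrow> L 0 = {} \<and> R 0 = V \<and> L (Suc m) = V \<and> R (Suc m) = {}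
     \<and> (\<forall>k\<le>Suc m. sep V E (L k) (R k)) \<and> (\<forall>k\<le>m. L k \<subseteq> L (Suc k) \<and> R (Suc k) \<subseteq> R k)"

definition pv :: "nat \<Rightarrow> (nat \<Rightarrow> nat set) \<Rightarrow> (nat \<Rightarrow> nat set) \<Rightarrow> bool" where
  "pv m L R \<longleftrightarrow> (\<forall>k\<le>m. (\<exists>x. x \<in> L (Suc k) \<and> x \<in> R k \<and> x \<notin> L k)
       \<and> (\<exists>y. y \<in> L (Suc k) \<and> y \<in> R k \<and> y \<notin> R (Suc k)))"

definition bags :: "nat \<Rightarrow> (nat \<Rightarrow> nat set) \<Rightarrow> (nat \<Rightarrow> nat set) \<Rightarrow> nat set list" where
  "bags m L R = map (\<lambda>k. L (Suc k) \<inter> R k) [0..<Suc m]"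

lemma bags_len[simp]: "length (bags m L R) = Suc m"
  unfolding bags_def by simp

lemma bags_nth[simp]: "k < Suc m \<Longrightarrow> bags m L R ! k = L (Suc k) \<inter> R k"
  unfolding bags_def by (simp del: upt_Suc)

lemma chain_mono:
  assumes "chain V E m L R" "i \<le> j" "j \<le> Suc m"
  shows "L i \<subseteq> L j \<and> R j \<subseteq> R i"
  using assms(2,3)
proof (induction j rule: dec_induct)
  case base then show ?case by simp
next
  case (step n)
  then have "L n \<subseteq> L (Suc n) \<and> R (Suc n) \<subseteq> R n" using assms(1) unfolding chain_def by simp
  with step show ?case by auto
qed

lemma chain_sub_V:
  assumes "chain V E m L R" "k \<le> Suc m"
  shows "L k \<subseteq> V" "R k \<subseteq> V"
  using assms unfolding chain_def sep_def by blast+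

lemma chain_pd:
  assumes g: "graph V E" and c: "chain V E m L R"
  shows "path_decomp V E (bags m L R)"
proof -
  have cov: "\<exists>k\<le>m. v \<in> L (Suc k) \<and> v \<in> R k" if "v \<in> V" for v
  proof -
    have ex: "\<exists>k. v \<in> L (Suc k)" using c that unfolding chain_def by (intro exI[of _ m]) simp
    define k where "k = (LEAST k. v \<in> L (Suc k))"
    have k1: "v \<in> L (Suc k)" unfolding k_def by (rule LeastI_ex[OF ex])
    have "v \<in> L (Suc m)" using c that by (simp add: chain_def)
    then have km: "k \<le> m" unfolding k_def by (rule Least_le)
    have "v \<notin> L k"
    proof (cases k)
      case 0 then show ?thesis using c unfolding chain_def by simp
    next
      case (Suc k') then show ?thesis using not_less_Least[of k' "\<lambda>k. v \<in> L (Suc k)"] unfolding k_def by auto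
    qed
    moreover have "L k \<union> R k = V" using c km unfolding chain_def sep_def by simp
    ultimately have "v \<in> R k" using that by blast
    then show ?thesis using k1 km by blast
  qed
  have edge: "\<exists>k\<le>m. u \<in> L (Suc k) \<and> v \<in> L (Suc k) \<and> u \<in> R k \<and> v \<in> R k" if "E u v" for u v
  proof -
    have uv: "u \<in> V" "v \<in> V" using g that unfolding graph_def by blast+
    have ex: "\<exists>k. u \<in> L (Suc k) \<and> v \<in> L (Suc k)" using c uv unfolding chain_def by (intro exI[of _ m]) simp
    define k where "k = (LEAST k. u \<in> L (Suc k) \<and> v \<in> L (Suc k))"
    have k1: "u \<in> L (Suc k) \<and> v \<in> L (Suc k)" unfolding k_def by (rule LeastI_ex[OF ex])
    have "u \<in> L (Suc m) \<and> v \<in> L (Suc m)" using c uv by (simp add: chain_def)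
    then have km: "k \<le> m" unfolding k_def by (rule Least_le)
    have sp: "sep V E (L k) (R k)" using c km unfolding chain_def by simp
    have "\<not> (u \<in> L k \<and> v \<in> L k)"
    proof (cases k)
      case 0 then show ?thesis using c unfolding chain_def by simp
    next
      case (Suc k') then show ?thesis using not_less_Least[of k' "\<lambda>k. u \<in> L (Suc k) \<and> v \<in> L (Suc k)"] unfolding k_def by auto
    qed
    moreover have LR: "L k \<union> R k = V" using sp unfolding sep_def by simp
    moreover have "E v u" using g that unfolding graph_def by blast
    ultimately have "u \<in> R k \<and> v \<in> R k"
    proof -
      { assume "u \<notin> L k"
        then have "u \<in> R k" using LR uv by blast
        then have "v \<in> R k" using sep_other[OF g sp \<open>E u v\<close>] \<open>u \<notin> L k\<close> by blast
        then have ?thesis using \<open>u \<in> R k\<close> by blast }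
      moreover
      { assume "v \<notin> L k"
        then have "v \<in> R k" using LR uv by blast
        then have "u \<in> R k" using sep_other[OF g sp \<open>E v u\<close>] \<open>v \<notin> L k\<close> by blast
        then have ?thesis using \<open>v \<in> R k\<close> by blast }
      ultimately show ?thesis using \<open>\<not> (u \<in> L k \<and> v \<in> L k)\<close> by blast
    qed
    then show ?thesis using k1 km by blast
  qed
  show ?thesis
    unfolding path_decomp_def
  proof (intro conjI allI impI ballI)
    show "bags m L R \<noteq> []" by (simp add: bags_def)
  next
    fix i assume "i < length (bags m L R)"
    then show "bags m L R ! i \<subseteq> V" using chain_sub_V[OF c, of "Suc i"] by auto
  next
    fix u v assume "E u v"
    then show "\<exists>i<length (bags m L R). u \<in> bags m L R ! i \<and> v \<in> bags m L R ! i"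
    proof -
      obtain k where "k \<le> m" "u \<in> L (Suc k) \<and> v \<in> L (Suc k) \<and> u \<in> R k \<and> v \<in> R k"
        using edge \<open>E u v\<close> by blast
      then show ?thesis by (intro exI[of _ k]) auto
    qed
  next
    fix v assume "v \<in> V"
    then obtain k where "k \<le> m" "v \<in> L (Suc k) \<and> v \<in> R k" using cov by blast
    then show "\<exists>i<length (bags m L R). v \<in> bags m L R ! i" by (intro exI[of _ k]) auto
  next
    fix v i j k assume "v \<in> V" and h: "i \<le> j \<and> j \<le> k \<and> k < length (bags m L R) \<and> v \<in> bags m L R ! i \<and> v \<in> bags m L R ! k"
    then have "v \<in> L (Suc i)" "v \<in> R k" "k \<le> m" by auto
    moreover have "L (Suc i) \<subseteq> L (Suc j)" using chain_mono[OF c, of "Suc i" "Suc j"] h by auto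
    moreover have "R k \<subseteq> R j" using chain_mono[OF c, of j k] h by auto
    ultimately show "v \<in> bags m L R ! j" using h by auto
  qed
qed

lemma chain_proper:
  assumes c: "chain V E m L R" and p: "pv m L R"
  shows "proper_pd (bags m L R)"
  unfolding proper_pd_def
proof (intro allI impI)
  fix i j assume h: "i < length (bags m L R)" "j < length (bags m L R)" "i \<noteq> j"
  show "\<not> bags m L R ! i \<subseteq> bags m L R ! j"
  proof (cases "i < j")
    case True
    have "i \<le> m" using h by simp
    then obtain y where y: "y \<in> L (Suc i)" "y \<in> R i" "y \<notin> R (Suc i)" using p unfolding pv_def by blast
    have "R j \<subseteq> R (Suc i)" using chain_mono[OF c, of "Suc i" j] h True by auto
    then show ?thesis using y h by auto
  next
    case False
    have "i \<le> m" using h by simp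
    then obtain x where x: "x \<in> L (Suc i)" "x \<in> R i" "x \<notin> L i" using p unfolding pv_def by blast
    have "L (Suc j) \<subseteq> L i" using chain_mono[OF c, of "Suc j" i] h False by auto
    then show ?thesis using x h by auto
  qed
qed

lemma chain_Lset:
  assumes c: "chain V E m L R" and k: "0 < k" "k \<le> m"
  shows "Lset (bags m L R) k = L k \<inter> R k"
proof -
  have "L k \<subseteq> L (Suc k)" "R k \<subseteq> R (k - 1)"
    using chain_mono[OF c, of k "Suc k"] chain_mono[OF c, of "k - 1" k] k by auto
  then show ?thesis using k unfolding Lset_def by auto
qed

lemma chain_Rset0:
  assumes c: "chain V E m L R" and k: "0 < m"
  shows "Rset (bags m L R) 0 = L 1 \<inter> R 1"
proof -
  have "L 1 \<subseteq> L (Suc 1)" "R 1 \<subseteq> R 0"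
    using chain_mono[OF c, of 1 "Suc 1"] chain_mono[OF c, of 0 1] k by auto
  then show ?thesis using k unfolding Rset_def by auto
qed

lemma chain_cover:
  assumes c: "chain V E m L R" and ij: "i < j" "j \<le> Suc m"
  shows "L j \<inter> R i \<subseteq> (\<Union>k\<in>{i..<j}. L (Suc k) \<inter> R k)"
proof
  fix v assume v: "v \<in> L j \<inter> R i"
  have ex: "\<exists>k. v \<in> L (Suc k)" using v ij by (intro exI[of _ "j - 1"]) auto
  define k where "k = (LEAST k. v \<in> L (Suc k))"
  have k1: "v \<in> L (Suc k)" unfolding k_def by (rule LeastI_ex[OF ex])
  have "v \<in> L (Suc (j - 1))" using v ij by auto
  then have "k \<le> j - 1" unfolding k_def by (rule Least_le)
  then have kj: "k < j" using ij by linarith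
  have nk: "v \<notin> L k"
  proof (cases k)
    case 0 then show ?thesis using c unfolding chain_def by simp
  next
    case (Suc k') then show ?thesis using not_less_Least[of k' "\<lambda>k. v \<in> L (Suc k)"] unfolding k_def by auto
  qed
  show "v \<in> (\<Union>k\<in>{i..<j}. L (Suc k) \<inter> R k)"
  proof (cases "k < i")
    case True
    have "L (Suc k) \<subseteq> L (Suc i)" using chain_mono[OF c, of "Suc k" "Suc i"] True ij by auto
    then show ?thesis using k1 v ij by auto
  next
    case False
    have "v \<in> V" using v chain_sub_V[OF c, of i] ij by auto
    moreover have "L k \<union> R k = V" using c kj ij unfolding chain_def sep_def by auto
    ultimately have "v \<in> R k" using nk by blast
    then show ?thesis using k1 kj False by auto
  qed
qed

definition Lb :: "nat set list \<Rightarrow> nat \<Rightarrow> nat set" where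
  "Lb B k = (\<Union>i\<in>{i. i < k \<and> i < length B}. B ! i)"
definition Rb :: "nat set list \<Rightarrow> nat \<Rightarrow> nat set" where
  "Rb B k = (\<Union>i\<in>{i. k \<le> i \<and> i < length B}. B ! i)"

lemma pd_interval:
  assumes "path_decomp V E B" "v \<in> B ! i" "v \<in> B ! k" "i \<le> j" "j \<le> k" "k < length B"
  shows "v \<in> B ! j"
proof -
  have "B ! i \<subseteq> V" using assms unfolding path_decomp_def by auto
  then have "v \<in> V" using assms by auto
  then show ?thesis using assms unfolding path_decomp_def by blast
qed

lemma pd_union:
  assumes "path_decomp V E B"
  shows "(\<Union>i\<in>{i. i < length B}. B ! i) = V"
  using assms unfolding path_decomp_def by blast

lemma pd_chain:
  assumes g: "graph V E" and pd: "path_decomp V E B"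
  shows "chain V E (length B - 1) (Lb B) (Rb B)"
proof -
  have ne: "length B \<ge> 1" using pd unfolding path_decomp_def by (cases B) auto
  have U: "(\<Union>i\<in>{i. i < length B}. B ! i) = V" by (rule pd_union[OF pd])
  have s1: "Suc (length B - 1) = length B" using ne by simp
  have sepk: "sep V E (Lb B k) (Rb B k)" for k
    unfolding sep_def
  proof (intro conjI allI impI)
    have "{i. i < length B} = {i. i < k \<and> i < length B} \<union> {i. k \<le> i \<and> i < length B}" by auto
    then show "Lb B k \<union> Rb B k = V" unfolding Lb_def Rb_def U[symmetric] by (simp add: UN_Un)
  next
    fix u v assume e: "E u v" and u: "u \<in> Lb B k" "u \<notin> Rb B k"
    obtain i where i: "i < length B" "u \<in> B ! i" "v \<in> B ! i" using pd e unfolding path_decomp_def by blast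
    have "i < k"
    proof (rule ccontr)
      assume "\<not> i < k"
      then have "i \<in> {i. k \<le> i \<and> i < length B}" using i by auto
      then have "u \<in> Rb B k" unfolding Rb_def using i by blast
      then show False using u by blast
    qed
    then show "v \<in> Lb B k" using i unfolding Lb_def by auto
  qed
  show ?thesis unfolding chain_def s1
  proof (intro conjI allI impI)
    show "Lb B 0 = {}" unfolding Lb_def by simp
    show "Rb B 0 = V" unfolding Rb_def U[symmetric] by simp
    show "Lb B (length B) = V" unfolding Lb_def U[symmetric] by simp
    show "Rb B (length B) = {}" unfolding Rb_def by auto
  next
    fix k show "sep V E (Lb B k) (Rb B k)" by (rule sepk)
  next
    fix k show "Lb B k \<subseteq> Lb B (Suc k)" unfolding Lb_def by (intro UN_mono) auto
  next
    fix k show "Rb B (Suc k) \<subseteq> Rb B k" unfolding Rb_def by (intro UN_mono) auto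
  qed
qed

lemma pd_bag:
  assumes pd: "path_decomp V E B" and k: "k < length B"
  shows "Lb B (Suc k) \<inter> Rb B k = B ! k"
proof
  show "B ! k \<subseteq> Lb B (Suc k) \<inter> Rb B k" using k unfolding Lb_def Rb_def by auto
  show "Lb B (Suc k) \<inter> Rb B k \<subseteq> B ! k"
  proof
    fix v assume "v \<in> Lb B (Suc k) \<inter> Rb B k"
    then obtain i j where "i < Suc k" "v \<in> B ! i" "k \<le> j" "j < length B" "v \<in> B ! j"
      unfolding Lb_def Rb_def by blast
    moreover have "i \<le> k" using \<open>i < Suc k\<close> by simp
    ultimately show "v \<in> B ! k" using pd_interval[OF pd, of v i j k] by blast
  qed
qed

lemma pd_adh:
  assumes pd: "path_decomp V E B" and k: "0 < k" "k < length B"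
  shows "Lb B k \<inter> Rb B k = B ! (k - 1) \<inter> B ! k"
proof
  show "B ! (k - 1) \<inter> B ! k \<subseteq> Lb B k \<inter> Rb B k"
  proof
    fix v assume v: "v \<in> B ! (k - 1) \<inter> B ! k"
    have "k - 1 \<in> {i. i < k \<and> i < length B}" "k \<in> {i. k \<le> i \<and> i < length B}" using k by auto
    then show "v \<in> Lb B k \<inter> Rb B k" using v unfolding Lb_def Rb_def by blast
  qed
  show "Lb B k \<inter> Rb B k \<subseteq> B ! (k - 1) \<inter> B ! k"
  proof
    fix v assume "v \<in> Lb B k \<inter> Rb B k"
    then obtain i j where "i < k" "v \<in> B ! i" "k \<le> j" "j < length B" "v \<in> B ! j"
      unfolding Lb_def Rb_def by auto
    then show "v \<in> B ! (k - 1) \<inter> B ! k" using pd_interval[OF pd, of v i j] by auto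
  qed
qed

lemma proper_D:
  "proper_pd B \<Longrightarrow> i < length B \<Longrightarrow> j < length B \<Longrightarrow> i \<noteq> j \<Longrightarrow> \<not> B ! i \<subseteq> B ! j"
  unfolding proper_pd_def by blast

lemma pd_pv:
  assumes pd: "path_decomp V E B" and pr: "proper_pd B" and l: "2 \<le> length B"
  shows "pv (length B - 1) (Lb B) (Rb B)"
  unfolding pv_def
proof (intro allI impI conjI)
  fix k assume k: "k \<le> length B - 1"
  have kl: "k < length B" using k l by simp
  have bk: "Lb B (Suc k) \<inter> Rb B k = B ! k" by (rule pd_bag[OF pd kl])
  obtain x where x: "x \<in> B ! k" "k > 0 \<longrightarrow> x \<notin> B ! (k - 1)"
  proof (cases k)
    case 0
    have "0 < length B" "1 < length B" using l by auto
    then have "\<not> B ! 0 \<subseteq> B ! 1" using proper_D[OF pr, of 0 1] by auto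
    then show ?thesis using that 0 by auto
  next
    case (Suc k')
    have "\<not> B ! k \<subseteq> B ! k'" using proper_D[OF pr, of k k'] kl Suc by auto
    then show ?thesis using that Suc by auto
  qed
  have "x \<notin> Lb B k"
  proof
    assume "x \<in> Lb B k"
    then obtain i where "i < k" "x \<in> B ! i" unfolding Lb_def by auto
    then have "x \<in> B ! (k - 1)" using pd_interval[OF pd, of x i k "k - 1"] x kl by auto
    then show False using x \<open>i < k\<close> by auto
  qed
  then show "\<exists>x. x \<in> Lb B (Suc k) \<and> x \<in> Rb B k \<and> x \<notin> Lb B k" using bk x by blast
  obtain y where y: "y \<in> B ! k" "Suc k < length B \<longrightarrow> y \<notin> B ! (Suc k)"
  proof (cases "Suc k < length B")
    case True
    have "\<not> B ! k \<subseteq> B ! (Suc k)" using proper_D[OF pr, of k "Suc k"] kl True by auto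
    then show ?thesis using that by auto
  next
    case False
    have "0 < length B" "k \<noteq> 0" using False l kl by auto
    then have "\<not> B ! k \<subseteq> B ! 0" using proper_D[OF pr, of k 0] kl by auto
    then show ?thesis using that False by auto
  qed
  have "y \<notin> Rb B (Suc k)"
  proof
    assume "y \<in> Rb B (Suc k)"
    then obtain j where "Suc k \<le> j" "j < length B" "y \<in> B ! j" unfolding Rb_def by auto
    then have "y \<in> B ! (Suc k)" using pd_interval[OF pd, of y k j "Suc k"] y by auto
    then show False using y \<open>Suc k \<le> j\<close> \<open>j < length B\<close> by auto
  qed
  then show "\<exists>y. y \<in> Lb B (Suc k) \<and> y \<in> Rb B k \<and> y \<notin> Rb B (Suc k)" using bk y by blast
qed

lemma bracket:
  assumes c: "chain V E m L R" and p: "pv m L R"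
    and h: "\<forall>j\<le>Suc m'. sep V E (A j) (B j) \<and> lo j \<le> hi j \<and> hi j \<le> Suc m
       \<and> L (lo j) \<subseteq> A j \<and> A j \<subseteq> L (hi j) \<and> R (hi j) \<subseteq> B j \<and> B j \<subseteq> R (lo j)"
    and hl: "\<forall>j\<le>m'. hi j < lo (Suc j)"
    and e: "lo 0 = 0" "hi 0 = 0" "lo (Suc m') = Suc m" "hi (Suc m') = Suc m"
  shows "chain V E m' A B \<and> pv m' A B"
proof
  have L0: "L 0 = {}" "R 0 = V" "L (Suc m) = V" "R (Suc m) = {}" using c unfolding chain_def by auto
  have h0: "sep V E (A 0) (B 0)" "A 0 \<subseteq> L 0" "R 0 \<subseteq> B 0" using h[rule_format, of 0] e by auto
  have hm: "sep V E (A (Suc m')) (B (Suc m'))" "L (Suc m) \<subseteq> A (Suc m')" "B (Suc m') \<subseteq> R (Suc m)"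
    using h[rule_format, of "Suc m'"] e by auto
  show "chain V E m' A B" unfolding chain_def
  proof (intro conjI allI impI)
    show "A 0 = {}" using h0 L0 by auto
    show "B 0 = V" using h0 L0 unfolding sep_def by auto
    show "A (Suc m') = V" using hm L0 unfolding sep_def by auto
    show "B (Suc m') = {}" using hm L0 by auto
  next
    fix k assume "k \<le> Suc m'" then show "sep V E (A k) (B k)" using h by auto
  next
    fix k assume k: "k \<le> m'"
    have a: "A k \<subseteq> L (hi k)" "R (hi k) \<subseteq> B k" "hi k \<le> Suc m" using h k by auto
    have b: "L (lo (Suc k)) \<subseteq> A (Suc k)" "B (Suc k) \<subseteq> R (lo (Suc k))" "lo (Suc k) \<le> Suc m" using h k by auto
    have "L (hi k) \<subseteq> L (lo (Suc k)) \<and> R (lo (Suc k)) \<subseteq> R (hi k)"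
      using chain_mono[OF c, of "hi k" "lo (Suc k)"] hl[rule_format, OF k] b by auto
    then show "A k \<subseteq> A (Suc k)" "B (Suc k) \<subseteq> B k" using a b by auto
  qed
  show "pv m' A B" unfolding pv_def
  proof (intro allI impI conjI)
    fix j assume j: "j \<le> m'"
    define i where "i = hi j"
    define i' where "i' = lo (Suc j)"
    have ii: "i < i'" using hl j unfolding i_def i'_def by auto
    have i'm: "i' \<le> Suc m" using h j unfolding i'_def by auto
    have aj: "A j \<subseteq> L i" "R i \<subseteq> B j" using h j unfolding i_def by auto
    have aj1: "L i' \<subseteq> A (Suc j)" "B (Suc j) \<subseteq> R i'" using h j unfolding i'_def by auto
    have "i \<le> m" using ii i'm by simp
    then obtain x where x: "x \<in> L (Suc i)" "x \<in> R i" "x \<notin> L i" using p unfolding pv_def by blast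
    have "L (Suc i) \<subseteq> L i'" using chain_mono[OF c, of "Suc i" i'] ii i'm by auto
    then show "\<exists>x. x \<in> A (Suc j) \<and> x \<in> B j \<and> x \<notin> A j" using x aj aj1 by blast
    have "i' - 1 \<le> m" using ii i'm by simp
    then obtain y where y: "y \<in> L (Suc (i' - 1))" "y \<in> R (i' - 1)" "y \<notin> R (Suc (i' - 1))"
      using p unfolding pv_def by blast
    have s: "Suc (i' - 1) = i'" using ii by simp
    have "R (i' - 1) \<subseteq> R i" using chain_mono[OF c, of i "i' - 1"] ii i'm by auto
    then show "\<exists>y. y \<in> A (Suc j) \<and> y \<in> B j \<and> y \<notin> B (Suc j)" using y aj aj1 s by (metis subsetD)
  qed
qed

lemma card_cover:
  assumes c: "chain V E m L R" and g: "graph V E" and ij: "i < j" "j \<le> Suc m"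
    and bd: "\<forall>k. i \<le> k \<and> k < j \<longrightarrow> card (L (Suc k) \<inter> R k) \<le> w"
  shows "card (L j \<inter> R i) \<le> (j - i) * w"
proof -
  have fin: "finite V" using g unfolding graph_def by simp
  have "card (L j \<inter> R i) \<le> card (\<Union>k\<in>{i..<j}. L (Suc k) \<inter> R k)"
  proof (rule card_mono)
    have "\<forall>k\<in>{i..<j}. L (Suc k) \<subseteq> V" using chain_sub_V[OF c] ij by auto
    then have "(\<Union>k\<in>{i..<j}. L (Suc k) \<inter> R k) \<subseteq> V" by blast
    then show "finite (\<Union>k\<in>{i..<j}. L (Suc k) \<inter> R k)" using fin finite_subset by blast
  qed (rule chain_cover[OF c ij])
  also have "\<dots> \<le> (\<Sum>k\<in>{i..<j}. card (L (Suc k) \<inter> R k))" by (rule card_UN_le) simp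
  also have "\<dots> \<le> (\<Sum>k\<in>{i..<j}. w)" by (rule sum_mono) (use bd in auto)
  also have "\<dots> = (j - i) * w" by simp
  finally show ?thesis .
qed

lemma gpath_Cons:
  "gpath V E (a # q) \<longleftrightarrow> a \<in> V \<and> a \<notin> set q \<and> (q = [] \<or> (gpath V E q \<and> E a (hd q)))"
proof (cases q)
  case Nil then show ?thesis unfolding gpath_def by auto
next
  case (Cons b r)
  have "(\<forall>i. i + 1 < length (a # q) \<longrightarrow> E ((a # q) ! i) ((a # q) ! (i + 1)))
      \<longleftrightarrow> E a b \<and> (\<forall>i. i + 1 < length q \<longrightarrow> E (q ! i) (q ! (i + 1)))"
  proof
    assume h: "\<forall>i. i + 1 < length (a # q) \<longrightarrow> E ((a # q) ! i) ((a # q) ! (i + 1))"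
    have "E a b" using h[rule_format, of 0] Cons by simp
    moreover have "\<forall>i. i + 1 < length q \<longrightarrow> E (q ! i) (q ! (i + 1))"
    proof (intro allI impI)
      fix i assume "i + 1 < length q"
      then show "E (q ! i) (q ! (i + 1))" using h[rule_format, of "Suc i"] by simp
    qed
    ultimately show "E a b \<and> (\<forall>i. i + 1 < length q \<longrightarrow> E (q ! i) (q ! (i + 1)))" by blast
  next
    assume h: "E a b \<and> (\<forall>i. i + 1 < length q \<longrightarrow> E (q ! i) (q ! (i + 1)))"
    show "\<forall>i. i + 1 < length (a # q) \<longrightarrow> E ((a # q) ! i) ((a # q) ! (i + 1))"
    proof (intro allI impI)
      fix i assume i: "i + 1 < length (a # q)"
      show "E ((a # q) ! i) ((a # q) ! (i + 1))"
      proof (cases i)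
        case 0 then show ?thesis using h Cons by simp
      next
        case (Suc j) then show ?thesis using h i by simp
      qed
    qed
  qed
  then show ?thesis using Cons unfolding gpath_def by auto
qed

lemma gpath_append:
  assumes "xs \<noteq> []" "ys \<noteq> []"
  shows "gpath V E (xs @ ys) \<longleftrightarrow> gpath V E xs \<and> gpath V E ys \<and> set xs \<inter> set ys = {} \<and> E (last xs) (hd ys)"
  using assms(1)
proof (induction xs)
  case Nil then show ?case by simp
next
  case (Cons a xs)
  show ?case
  proof (cases "xs = []")
    case True
    then show ?thesis using assms(2) by (auto simp: gpath_Cons)
  next
    case False
    then show ?thesis using Cons.IH assms(2) by (auto simp: gpath_Cons)
  qed
qed

lemma gpath_ne: "gpath V E p \<Longrightarrow> p \<noteq> []"
  unfolding gpath_def by simp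

lemma gpath_set: "gpath V E p \<Longrightarrow> set p \<subseteq> V"
  unfolding gpath_def by simp

lemma gpath_take:
  assumes "gpath V E p" "0 < n"
  shows "gpath V E (take n p)"
proof (cases "drop n p = []")
  case True then show ?thesis using assms by simp
next
  case False
  have "take n p \<noteq> []" using assms gpath_ne[OF assms(1)] by simp
  then show ?thesis using gpath_append[OF _ False, of "take n p" V E] assms(1) by simp
qed

lemma gpath_butlast:
  assumes "gpath V E p" "butlast p \<noteq> []"
  shows "gpath V E (butlast p) \<and> E (last (butlast p)) (last p) \<and> last p \<notin> set (butlast p)"
proof -
  have "p = butlast p @ [last p]" using gpath_ne[OF assms(1)] by simp
  then have "gpath V E (butlast p @ [last p])" using assms(1) by simp
  then show ?thesis using gpath_append[OF assms(2), of "[last p]" V E] by simp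
qed

lemma gpath_mono:
  assumes "gpath V E p" "\<And>u v. E u v \<Longrightarrow> E' u v"
  shows "gpath V E' p"
  using assms unfolding gpath_def by blast

lemma gpath_rev:
  assumes g: "graph V E" and p: "gpath V E p"
  shows "gpath V E (rev p)"
  using p
proof (induction p)
  case Nil then show ?case by (simp add: gpath_def)
next
  case (Cons a q)
  show ?case
  proof (cases "q = []")
    case True then show ?thesis using Cons.prems by simp
  next
    case False
    have h: "a \<in> V" "a \<notin> set q" "gpath V E q" "E a (hd q)" using Cons.prems False by (auto simp: gpath_Cons)
    have "E (hd q) a" using h(4) g unfolding graph_def by blast
    moreover have "last (rev q) = hd q" using False by (simp add: last_rev)
    moreover have "gpath V E [a]" using h(1) by (simp add: gpath_def)
    ultimately show ?thesis using gpath_append[of "rev q" "[a]" V E] Cons.IH h False by simp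
  qed
qed

definition linkset :: "nat set \<Rightarrow> (nat \<Rightarrow> nat \<Rightarrow> bool) \<Rightarrow> nat set \<Rightarrow> nat set \<Rightarrow> nat list set \<Rightarrow> bool" where
  "linkset V E X Y P \<longleftrightarrow> finite P \<and> (\<forall>p\<in>P. gpath V E p \<and> hd p \<in> X \<and> last p \<in> Y)
     \<and> (\<forall>p\<in>P. \<forall>q\<in>P. p \<noteq> q \<longrightarrow> set p \<inter> set q = {})"

lemma linkset_dp:
  assumes "linkset V E X Y P"
  shows "disjoint_paths V E (card P) X Y"
proof -
  have f: "finite P" using assms unfolding linkset_def by simp
  obtain Ps where Ps: "set Ps = P" "distinct Ps" using finite_distinct_list[OF f] by blast
  have len: "length Ps = card P" using Ps distinct_card by metis
  show ?thesis unfolding disjoint_paths_def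
  proof (intro exI[of _ Ps] conjI allI impI)
    show "length Ps = card P" by (rule len)
  next
    fix k assume "k < card P"
    then have "Ps ! k \<in> P" using Ps len by (metis nth_mem)
    then show "gpath V E (Ps ! k)" "hd (Ps ! k) \<in> X" "last (Ps ! k) \<in> Y" using assms unfolding linkset_def by auto
  next
    fix k l assume "k < card P" "l < card P" "k \<noteq> l"
    then have "Ps ! k \<in> P" "Ps ! l \<in> P" "Ps ! k \<noteq> Ps ! l" using Ps len by (auto simp: nth_eq_iff_index_eq)
    then show "set (Ps ! k) \<inter> set (Ps ! l) = {}" using assms unfolding linkset_def by auto
  qed
qed

lemma trunc_path:
  assumes p: "gpath V E p" and l: "last p \<in> Y"
  shows "\<exists>q. gpath V E q \<and> hd q = hd p \<and> last q \<in> Y \<and> set q \<subseteq> set p \<and> (\<forall>v\<in>set (butlast q). v \<notin> Y)"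
proof -
  have ne: "p \<noteq> []" using gpath_ne[OF p] .
  have ex: "\<exists>i. p ! i \<in> Y" using l ne by (intro exI[of _ "length p - 1"]) (simp add: last_conv_nth)
  define n where "n = (LEAST i. p ! i \<in> Y)"
  have n1: "p ! n \<in> Y" unfolding n_def by (rule LeastI_ex[OF ex])
  have "n \<le> length p - 1" unfolding n_def using l ne by (intro Least_le) (simp add: last_conv_nth)
  then have nl: "n < length p" using ne by (cases p) auto
  define q where "q = take (Suc n) p"
  have q: "q = take n p @ [p ! n]" unfolding q_def using nl by (simp add: take_Suc_conv_app_nth)
  show ?thesis
  proof (intro exI[of _ q] conjI ballI)
    show "gpath V E q" unfolding q_def by (rule gpath_take[OF p]) simp
    show "hd q = hd p" unfolding q_def using ne by (cases p) auto
    show "last q \<in> Y" using q n1 by simp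
    show "set q \<subseteq> set p" unfolding q_def by (rule set_take_subset)
  next
    fix v assume "v \<in> set (butlast q)"
    then have "v \<in> set (take n p)" using q by simp
    then obtain i where "i < n" "v = p ! i" using nl by (auto simp: in_set_conv_nth)
    then show "v \<notin> Y" using not_less_Least[of i "\<lambda>i. p ! i \<in> Y"] unfolding n_def by auto
  qed
qed

lemma linkset_trunc:
  assumes L: "linkset V E X Y P"
  shows "\<exists>P'. linkset V E X Y P' \<and> card P' = card P \<and> (\<forall>p\<in>P'. \<forall>v\<in>set (butlast p). v \<notin> Y)"
proof -
  define Prop where "Prop p q \<longleftrightarrow> gpath V E q \<and> hd q = hd p \<and> last q \<in> Y \<and> set q \<subseteq> set p \<and> (\<forall>v\<in>set (butlast q). v \<notin> Y)" for p q
  define t where "t p = (SOME q. Prop p q)" for p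
  have tP: "Prop p (t p)" if "p \<in> P" for p
  proof -
    have "\<exists>q. Prop p q" unfolding Prop_def by (rule trunc_path) (use L that in \<open>auto simp: linkset_def\<close>)
    then show ?thesis unfolding t_def by (rule someI_ex)
  qed
  have inj: "inj_on t P"
  proof (rule inj_onI)
    fix p p' assume h: "p \<in> P" "p' \<in> P" "t p = t p'"
    have "hd p = hd p'" using tP[OF h(1)] tP[OF h(2)] h(3) unfolding Prop_def by metis
    moreover have "p \<noteq> []" "p' \<noteq> []" using L h gpath_ne unfolding linkset_def by blast+
    ultimately have "hd p \<in> set p \<inter> set p'" by (metis IntI list.set_sel(1))
    then show "p = p'" using L h unfolding linkset_def by blast
  qed
  show ?thesis
  proof (intro exI[of _ "t ` P"] conjI)
    show "card (t ` P) = card P" using card_image[OF inj] .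
    show "\<forall>p\<in>t ` P. \<forall>v\<in>set (butlast p). v \<notin> Y" using tP unfolding Prop_def by blast
    show "linkset V E X Y (t ` P)" unfolding linkset_def
    proof (intro conjI ballI impI)
      show "finite (t ` P)" using L unfolding linkset_def by simp
    next
      fix q assume "q \<in> t ` P"
      then obtain p where p: "p \<in> P" "q = t p" by blast
      then show "gpath V E q" "hd q \<in> X" "last q \<in> Y" using tP[OF p(1)] L unfolding Prop_def linkset_def by auto
    next
      fix q q' assume "q \<in> t ` P" "q' \<in> t ` P" "q \<noteq> q'"
      then obtain p p' where p: "p \<in> P" "q = t p" "p' \<in> P" "q' = t p'" "p \<noteq> p'" by blast
      then have "set p \<inter> set p' = {}" using L unfolding linkset_def by blast
      then show "set q \<inter> set q' = {}" using tP[OF p(1)] tP[OF p(3)] p unfolding Prop_def by blast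
    qed
  qed
qed

lemma linkset_rev:
  assumes g: "graph V E" and L: "linkset V E X Y P"
  shows "linkset V E Y X (rev ` P) \<and> card (rev ` P) = card P"
proof
  show "card (rev ` P) = card P" by (rule card_image) (simp add: inj_on_def)
  show "linkset V E Y X (rev ` P)" unfolding linkset_def
  proof (intro conjI ballI impI)
    show "finite (rev ` P)" using L unfolding linkset_def by simp
  next
    fix q assume "q \<in> rev ` P"
    then obtain p where p: "p \<in> P" "q = rev p" by blast
    have ne: "p \<noteq> []" using L p gpath_ne unfolding linkset_def by blast
    show "gpath V E q" using gpath_rev[OF g] L p unfolding linkset_def by blast
    show "hd q \<in> Y" "last q \<in> X" using L p ne unfolding linkset_def by (auto simp: hd_rev last_rev)
  next
    fix q q' assume "q \<in> rev ` P" "q' \<in> rev ` P" "q \<noteq> q'"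
    then obtain p p' where "p \<in> P" "p' \<in> P" "q = rev p" "q' = rev p'" "p \<noteq> p'" by blast
    then show "set q \<inter> set q' = {}" using L unfolding linkset_def by simp
  qed
qed

lemma linkset_trunc_front:
  assumes g: "graph V E" and L: "linkset V E X Y P"
  shows "\<exists>P'. linkset V E X Y P' \<and> card P' = card P \<and> (\<forall>p\<in>P'. \<forall>v\<in>set (tl p). v \<notin> X)"
proof -
  have L1: "linkset V E Y X (rev ` P)" "card (rev ` P) = card P" using linkset_rev[OF g L] by auto
  obtain P1 where P1: "linkset V E Y X P1" "card P1 = card P" "\<forall>p\<in>P1. \<forall>v\<in>set (butlast p). v \<notin> X"
    using linkset_trunc[OF L1(1)] L1(2) by auto
  have L2: "linkset V E X Y (rev ` P1)" "card (rev ` P1) = card P" using linkset_rev[OF g P1(1)] P1(2) by auto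
  show ?thesis
  proof (intro exI[of _ "rev ` P1"] conjI)
    show "linkset V E X Y (rev ` P1)" "card (rev ` P1) = card P" using L2 by auto
    have "set (tl (rev p)) = set (butlast p)" for p :: "nat list"
      using butlast_rev[of "rev p"] by (metis rev_rev_ident set_rev)
    then show "\<forall>p\<in>rev ` P1. \<forall>v\<in>set (tl p). v \<notin> X" using P1(3) by auto
  qed
qed

lemma path_side:
  assumes s: "sep V E A B" and p: "gpath V E p" and h: "hd p \<in> A" and b: "\<forall>v\<in>set (butlast p). v \<notin> A \<inter> B"
  shows "set p \<subseteq> A \<and> set (butlast p) \<subseteq> A - B"
  using p h b
proof (induction p)
  case Nil then show ?case by (simp add: gpath_def)
next
  case (Cons a q)
  show ?case
  proof (cases "q = []")
    case True then show ?thesis using Cons.prems by simp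
  next
    case False
    have a: "a \<in> A" "a \<notin> B" using Cons.prems False by auto
    have q: "gpath V E q" "E a (hd q)" using Cons.prems(1) False by (auto simp: gpath_Cons)
    have "hd q \<in> A" using s q(2) a unfolding sep_def by blast
    moreover have "\<forall>v\<in>set (butlast q). v \<notin> A \<inter> B" using Cons.prems(3) False by simp
    ultimately have "set q \<subseteq> A \<and> set (butlast q) \<subseteq> A - B" using Cons.IH q by blast
    then show ?thesis using a False by simp
  qed
qed

lemma sep_swap:
  assumes g: "graph V E" and s: "sep V E A B"
  shows "sep V E B A"
  unfolding sep_def
proof (intro conjI allI impI)
  show "B \<union> A = V" using s unfolding sep_def by blast
  fix u v assume "E u v" "u \<in> B" "u \<notin> A"
  then show "v \<in> B" using sep_other[OF g s] by blast
qed

lemma path_side_rev: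
  assumes g: "graph V E" and s: "sep V E A B" and p: "gpath V E p" and h: "last p \<in> B"
    and b: "\<forall>v\<in>set (tl p). v \<notin> A \<inter> B"
  shows "set p \<subseteq> B \<and> set (tl p) \<subseteq> B - A"
proof -
  have ne: "p \<noteq> []" using gpath_ne[OF p] .
  have "set (rev p) \<subseteq> B \<and> set (butlast (rev p)) \<subseteq> B - A"
  proof (rule path_side[OF sep_swap[OF g s] gpath_rev[OF g p]])
    show "hd (rev p) \<in> B" using h ne by (simp add: hd_rev)
    show "\<forall>v\<in>set (butlast (rev p)). v \<notin> B \<inter> A" using b by (auto simp: butlast_rev)
  qed
  then show ?thesis by (simp add: butlast_rev)
qed

lemma linkset_mono:
  assumes "linkset V E X Y P" "\<And>u v. E u v \<Longrightarrow> E' u v"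
  shows "linkset V E' X Y P"
  using assms gpath_mono unfolding linkset_def by blast

lemma set_bl: "xs \<noteq> [] \<Longrightarrow> set xs = insert (last xs) (set (butlast xs))"
proof -
  assume a: "xs \<noteq> []"
  have "set (butlast xs @ [last xs]) = insert (last xs) (set (butlast xs))" by simp
  then show ?thesis using a by simp
qed

lemma combine:
  assumes g: "graph V E"
    and sA: "sep V E A (B \<union> {x})" and sB: "sep V E (A \<union> {y}) B"
    and x: "x \<in> A" "x \<notin> B" and y: "y \<in> B" "y \<notin> A" and exy: "E x y"
    and P1: "linkset V E X (A \<inter> B \<union> {x}) P1" "card P1 = p"
    and P2: "linkset V E (A \<inter> B \<union> {y}) Y P2" "card P2 = p"
    and XA: "X \<subseteq> A" and YB: "Y \<subseteq> B" and cS: "card (A \<inter> B) < p"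
  shows "\<exists>P. linkset V E X Y P \<and> card P = p"
proof -
  define Sx where "Sx = A \<inter> B \<union> {x}"
  define Sy where "Sy = A \<inter> B \<union> {y}"
  have finV: "finite V" using g unfolding graph_def by simp
  have AV: "A \<subseteq> V" "B \<subseteq> V" using sA sB unfolding sep_def by blast+
  have fS: "finite (A \<inter> B)" using AV finV finite_subset by blast
  have cSx: "card Sx \<le> p" unfolding Sx_def using cS fS by (simp add: card_insert_if)
  have cSy: "card Sy \<le> p" unfolding Sy_def using cS fS by (simp add: card_insert_if)
  have fSx: "finite Sx" "finite Sy" unfolding Sx_def Sy_def using fS by auto
  obtain Q1 where Q1: "linkset V E X Sx Q1" "card Q1 = p" "\<forall>q\<in>Q1. \<forall>v\<in>set (butlast q). v \<notin> Sx"
    using linkset_trunc[OF P1(1)] P1(2) unfolding Sx_def by auto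
  obtain Q2 where Q2: "linkset V E Sy Y Q2" "card Q2 = p" "\<forall>q\<in>Q2. \<forall>v\<in>set (tl q). v \<notin> Sy"
    using linkset_trunc_front[OF g P2(1)] P2(2) unfolding Sy_def by auto
  have AxS: "A \<inter> (B \<union> {x}) = Sx" unfolding Sx_def using x by auto
  have AyS: "(A \<union> {y}) \<inter> B = Sy" unfolding Sy_def using y by auto
  have q1: "gpath V E q" "hd q \<in> X" "last q \<in> Sx" "q \<noteq> []" if "q \<in> Q1" for q
    using Q1(1) that gpath_ne unfolding linkset_def by blast+
  have q2: "gpath V E q" "hd q \<in> Sy" "last q \<in> Y" "q \<noteq> []" if "q \<in> Q2" for q
    using Q2(1) that gpath_ne unfolding linkset_def by blast+
  have side1: "set q \<subseteq> A \<and> set (butlast q) \<subseteq> A - (B \<union> {x})" if "q \<in> Q1" for q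
    using path_side[OF sA q1(1)[OF that]] q1(2)[OF that] XA Q1(3) that AxS by blast
  have side2: "set q \<subseteq> B \<and> set (tl q) \<subseteq> B - (A \<union> {y})" if "q \<in> Q2" for q
    using path_side_rev[OF g sB q2(1)[OF that]] q2(3)[OF that] YB Q2(3) that AyS by blast
  have dis1: "q = q'" if "q \<in> Q1" "q' \<in> Q1" "v \<in> set q" "v \<in> set q'" for q q' v
    using Q1(1) that unfolding linkset_def by blast
  have dis2: "q = q'" if "q \<in> Q2" "q' \<in> Q2" "v \<in> set q" "v \<in> set q'" for q q' v
    using Q2(1) that unfolding linkset_def by blast
  have injl: "inj_on last Q1"
    by (rule inj_onI) (metis dis1 last_in_set q1(4))
  have injh: "inj_on hd Q2"
    by (rule inj_onI) (metis dis2 hd_in_set q2(4))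
  have lastQ1: "last ` Q1 = Sx"
  proof (rule card_subset_eq[OF fSx(1)])
    show "last ` Q1 \<subseteq> Sx" using q1 by blast
    then have "card (last ` Q1) \<le> card Sx" using fSx by (intro card_mono) auto
    then show "card (last ` Q1) = card Sx" using card_image[OF injl] Q1(2) cSx by simp
  qed
  have hdQ2: "hd ` Q2 = Sy"
  proof (rule card_subset_eq[OF fSx(2)])
    show "hd ` Q2 \<subseteq> Sy" using q2 by blast
    then have "card (hd ` Q2) \<le> card Sy" using fSx by (intro card_mono) auto
    then show "card (hd ` Q2) = card Sy" using card_image[OF injh] Q2(2) cSy by simp
  qed
  define \<tau> where "\<tau> v = (if v = x then y else v)" for v
  have \<tau>S: "\<tau> v \<in> Sy" if "v \<in> Sx" for v using that unfolding \<tau>_def Sx_def Sy_def by auto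
  have \<tau>inj: "v = v'" if "v \<in> Sx" "v' \<in> Sx" "\<tau> v = \<tau> v'" for v v'
    using that y unfolding \<tau>_def Sx_def by (auto split: if_splits)
  define Q where "Q q = (THE r. r \<in> Q2 \<and> hd r = \<tau> (last q))" for q
  have Qp: "Q q \<in> Q2 \<and> hd (Q q) = \<tau> (last q)" if "q \<in> Q1" for q
  proof -
    have "\<tau> (last q) \<in> Sy" by (rule \<tau>S[OF q1(3)[OF that]])
    then have "\<tau> (last q) \<in> hd ` Q2" using hdQ2 by (simp only:)
    then obtain r where r0: "\<tau> (last q) = hd r" "r \<in> Q2" by (rule imageE)
    then have r: "r \<in> Q2" "hd r = \<tau> (last q)" by simp_all
    have "\<exists>!r. r \<in> Q2 \<and> hd r = \<tau> (last q)"
    proof (rule ex1I[of _ r])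
      show "r \<in> Q2 \<and> hd r = \<tau> (last q)" using r by simp
    next
      fix r' assume "r' \<in> Q2 \<and> hd r' = \<tau> (last q)"
      then show "r' = r" using r inj_onD[OF injh, of r' r] by simp
    qed
    then show ?thesis unfolding Q_def by (rule theI')
  qed
  have setQ: "set (Q q) \<subseteq> insert (hd (Q q)) (B - A)" if "q \<in> Q1" for q
  proof -
    have "Q q \<noteq> []" using q2(4)[of "Q q"] Qp[OF that] by blast
    then have "Q q = hd (Q q) # tl (Q q)" by (rule hd_Cons_tl[symmetric])
    then have "set (Q q) = insert (hd (Q q)) (set (tl (Q q)))" by (metis list.simps(15))
    then show ?thesis using side2 Qp that by blast
  qed
  define C where "C q = (if last q = x then q @ Q q else butlast q @ Q q)" for q
  have Cprops: "gpath V E (C q) \<and> hd (C q) = hd q \<and> last (C q) \<in> Y \<and> set (C q) \<subseteq> set q \<union> set (Q q)"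
    if qq: "q \<in> Q1" for q
  proof -
    have Qq: "Q q \<in> Q2" "hd (Q q) = \<tau> (last q)" using Qp qq by auto
    have ne: "q \<noteq> []" "Q q \<noteq> []" using q1(4) q2(4) qq Qq by auto
    have lastC: "last (C q) = last (Q q)" unfolding C_def using ne by simp
    have sq: "q = butlast q @ [last q]" using ne by simp
    show ?thesis
    proof (cases "last q = x")
      case True
      have "set q \<inter> set (Q q) = {}" using setQ[OF qq] side1[OF qq] Qq True y \<tau>_def by auto
      moreover have "E (last q) (hd (Q q))" using True Qq exy \<tau>_def by simp
      ultimately have "gpath V E (q @ Q q)" using gpath_append[OF ne] q1(1)[OF qq] q2(1)[OF Qq(1)] by simp
      then show ?thesis unfolding C_def using True ne q2(3)[OF Qq(1)] by simp
    next
      case False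
      have hQ: "hd (Q q) = last q" using Qq False \<tau>_def by simp
      show ?thesis
      proof (cases "butlast q = []")
        case True
        have "q = [last q]" using sq True by simp
        then have "hd q = last q" by (metis list.sel(1))
        then show ?thesis unfolding C_def using False True hQ q2(1,3)[OF Qq(1)] by simp
      next
        case bne: False
        have gb: "gpath V E (butlast q)" "E (last (butlast q)) (last q)"
          using gpath_butlast[OF q1(1)[OF qq] bne] by auto
        have "set (butlast q) \<inter> set (Q q) = {}" using side1[OF qq] side2[OF Qq(1)] by blast
        then have "gpath V E (butlast q @ Q q)" using gpath_append[OF bne ne(2)] gb q2(1)[OF Qq(1)] hQ by simp
        moreover have "hd (butlast q @ Q q) = hd q" using sq bne by (metis hd_append2)
        moreover have "set (butlast q) \<subseteq> set q" by (rule in_set_butlastD[THEN subsetI])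
        ultimately show ?thesis unfolding C_def using False ne q2(3)[OF Qq(1)] by auto
      qed
    qed
  qed
  have qQ: "set q \<inter> set (Q q') = {}" if "q \<in> Q1" "q' \<in> Q1" "q \<noteq> q'" for q q'
  proof -
    have "set q \<inter> set (Q q') \<subseteq> {hd (Q q')} \<inter> set q" using setQ[OF that(2)] side1[OF that(1)] by blast
    moreover have "hd (Q q') \<notin> set q"
    proof
      assume h: "hd (Q q') \<in> set q"
      show False
      proof (cases "last q' = x")
        case True
        then have "hd (Q q') = y" using Qp[OF that(2)] \<tau>_def by simp
        then show False using h side1[OF that(1)] y by blast
      next
        case False
        then have hq: "hd (Q q') = last q'" using Qp[OF that(2)] \<tau>_def by simp
        have "last q' \<in> A \<inter> B" using False q1(3)[OF that(2)] unfolding Sx_def by auto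
        have sq: "set q = insert (last q) (set (butlast q))"
          using set_bl[OF q1(4)[OF that(1)]] .
        have l1: "last q' \<in> set q" using h hq by simp
        have "set (butlast q) \<subseteq> A - (B \<union> {x})" using side1[OF that(1)] by simp
        then have "last q' \<notin> set (butlast q)" using \<open>last q' \<in> A \<inter> B\<close> by blast
        then have "last q' = last q" using l1 sq by blast
        then show False using injl that unfolding inj_on_def by blast
      qed
    qed
    ultimately show ?thesis by blast
  qed
  have QQ: "set (Q q) \<inter> set (Q q') = {}" if "q \<in> Q1" "q' \<in> Q1" "q \<noteq> q'" for q q'
  proof -
    have "last q \<noteq> last q'" using injl that unfolding inj_on_def by blast
    then have "\<tau> (last q) \<noteq> \<tau> (last q')" using \<tau>inj q1(3) that by blast
    then have "Q q \<noteq> Q q'" using Qp that by metis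
    then show ?thesis using Qp that Q2(1) unfolding linkset_def by blast
  qed
  have injC: "inj_on C Q1"
  proof (rule inj_onI)
    fix q q' assume h: "q \<in> Q1" "q' \<in> Q1" "C q = C q'"
    then have "hd q = hd q'" using Cprops by metis
    then show "q = q'" using dis1[OF h(1,2)] q1(4) h by (metis hd_in_set)
  qed
  show ?thesis
  proof (intro exI[of _ "C ` Q1"] conjI)
    show "card (C ` Q1) = p" using card_image[OF injC] Q1(2) by simp
    show "linkset V E X Y (C ` Q1)" unfolding linkset_def
    proof (intro conjI ballI impI)
      show "finite (C ` Q1)" using Q1(1) unfolding linkset_def by simp
    next
      fix r assume "r \<in> C ` Q1"
      then obtain q where q: "q \<in> Q1" "r = C q" by blast
      then show "gpath V E r" "hd r \<in> X" "last r \<in> Y" using Cprops[OF q(1)] q1(2)[OF q(1)] by auto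
    next
      fix r r' assume "r \<in> C ` Q1" "r' \<in> C ` Q1" "r \<noteq> r'"
      then obtain q q' where q: "q \<in> Q1" "q' \<in> Q1" "r = C q" "r' = C q'" "q \<noteq> q'" by blast
      have "set q \<inter> set q' = {}" using Q1(1) q unfolding linkset_def by blast
      then show "set r \<inter> set r' = {}"
        using Cprops[OF q(1)] Cprops[OF q(2)] qQ[OF q(1,2,5)] qQ[OF q(2,1)] q(5) QQ[OF q(1,2,5)] q by blast
    qed
  qed
qed

lemma menger_base:
  assumes g: "graph V E" and ne: "\<forall>u v. \<not> E u v" and X: "X \<subseteq> V" and Y: "Y \<subseteq> V"
    and c: "p \<le> card (X \<inter> Y)"
  shows "\<exists>P. linkset V E X Y P \<and> card P = p"
proof -
  have fin: "finite (X \<inter> Y)" using g X unfolding graph_def by (meson finite_Int finite_subset)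
  obtain T where T: "T \<subseteq> X \<inter> Y" "card T = p" using obtain_subset_with_card_n[OF c] by blast
  have fT: "finite T" using T fin finite_subset by blast
  have inj: "inj_on (\<lambda>v. [v]) T" by (simp add: inj_on_def)
  show ?thesis
  proof (intro exI[of _ "(\<lambda>v. [v]) ` T"] conjI)
    show "card ((\<lambda>v. [v]) ` T) = p" using card_image[OF inj] T by simp
    show "linkset V E X Y ((\<lambda>v. [v]) ` T)" unfolding linkset_def
      using fT T X by (auto simp: gpath_def)
  qed
qed

lemma menger_n:
  assumes "card {(u, v). E u v} = n" "graph V E" "X \<subseteq> V" "Y \<subseteq> V"
    "\<forall>A B. sep V E A B \<and> X \<subseteq> A \<and> Y \<subseteq> B \<longrightarrow> p \<le> card (A \<inter> B)"
  shows "\<exists>P. linkset V E X Y P \<and> card P = p"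
  using assms
proof (induction n arbitrary: E X Y p rule: less_induct)
  case (less n)
  note g = less.prems(2) and X = less.prems(3) and Y = less.prems(4) and H = less.prems(5)
  have finV: "finite V" using g unfolding graph_def by simp
  have EV: "E u v \<Longrightarrow> u \<in> V \<and> v \<in> V" for u v using g unfolding graph_def by blast
  have Esym: "E u v \<Longrightarrow> E v u" for u v using g unfolding graph_def by blast
  have finE: "finite {(u, v). E u v}"
    by (rule finite_subset[of _ "V \<times> V"]) (use EV finV in auto)
  show ?case
  proof (cases "\<exists>u v. E u v")
    case False
    have "sep V E X ((V - X) \<union> (X \<inter> Y))" using X False unfolding sep_def by auto
    moreover have "Y \<subseteq> (V - X) \<union> (X \<inter> Y)" using Y by auto
    ultimately have "p \<le> card (X \<inter> ((V - X) \<union> (X \<inter> Y)))" using H by blast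
    moreover have "X \<inter> ((V - X) \<union> (X \<inter> Y)) = X \<inter> Y" by auto
    ultimately show ?thesis using menger_base[OF g _ X Y] False by auto
  next
    case True
    then obtain x0 y0 where e0: "E x0 y0" by blast
    define E' where "E' u v \<longleftrightarrow> E u v \<and> \<not> (u = x0 \<and> v = y0) \<and> \<not> (u = y0 \<and> v = x0)" for u v
    have E'E: "E' u v \<Longrightarrow> E u v" for u v unfolding E'_def by simp
    have g': "graph V E'" using g unfolding graph_def E'_def by blast
    have lt: "card {(u, v). E' u v} < n"
    proof -
      have "{(u, v). E' u v} \<subset> {(u, v). E u v}" using e0 unfolding E'_def by auto
      then show ?thesis using psubset_card_mono[OF finE] less.prems(1) by simp
    qed
    show ?thesis
    proof (cases "\<forall>A B. sep V E' A B \<and> X \<subseteq> A \<and> Y \<subseteq> B \<longrightarrow> p \<le> card (A \<inter> B)")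
      case True
      obtain P where "linkset V E' X Y P" "card P = p" using less.IH[OF lt refl g' X Y True] by blast
      then show ?thesis using linkset_mono[of V E' X Y P E] E'E by blast
    next
      case False
      then obtain A B where AB: "sep V E' A B" "X \<subseteq> A" "Y \<subseteq> B" "card (A \<inter> B) < p" by auto
      have "\<not> sep V E A B" using AB H by (meson not_le)
      moreover have U: "A \<union> B = V" using AB(1) unfolding sep_def by simp
      ultimately obtain x y where xy: "E x y" "x \<in> A" "x \<notin> B" "y \<notin> A" unfolding sep_def by blast
      have "\<not> E' x y" using AB(1) xy unfolding sep_def by blast
      then have xy0: "(x = x0 \<and> y = y0) \<or> (x = y0 \<and> y = x0)" using xy(1) unfolding E'_def by blast
      have yB: "y \<in> B" using EV[OF xy(1)] U xy(4) by blast
      have E'c: "E' u v \<longleftrightarrow> E u v \<and> \<not> (u = x \<and> v = y) \<and> \<not> (u = y \<and> v = x)" for u v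
        using xy0 unfolding E'_def by blast
      have sA: "sep V E A (B \<union> {x})" unfolding sep_def
      proof (intro conjI allI impI)
        show "A \<union> (B \<union> {x}) = V" using U xy by blast
      next
        fix u v assume h: "E u v" "u \<in> A" "u \<notin> B \<union> {x}"
        have "u \<noteq> y" using h xy by blast
        then have "E' u v" using h E'c by blast
        then show "v \<in> A" using AB(1) h unfolding sep_def by blast
      qed
      have sB: "sep V E (A \<union> {y}) B" unfolding sep_def
      proof (intro conjI allI impI)
        show "A \<union> {y} \<union> B = V" using U yB by blast
      next
        fix u v assume h: "E u v" "u \<in> A \<union> {y}" "u \<notin> B"
        show "v \<in> A \<union> {y}"
        proof (cases "u = x \<and> v = y")
          case True then show ?thesis by simp
        next
          case False
          have "u \<noteq> y" using h yB by blast
          then have "E' u v" using h E'c False by blast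
          then show ?thesis using AB(1) h \<open>u \<noteq> y\<close> unfolding sep_def by blast
        qed
      qed
      define Sx where "Sx = A \<inter> B \<union> {x}"
      define Sy where "Sy = A \<inter> B \<union> {y}"
      have SxV: "Sx \<subseteq> V" "Sy \<subseteq> V" unfolding Sx_def Sy_def using U xy yB by auto
      have H1: "\<forall>A' B'. sep V E' A' B' \<and> X \<subseteq> A' \<and> Sx \<subseteq> B' \<longrightarrow> p \<le> card (A' \<inter> B')"
      proof (intro allI impI)
        fix A' B' assume h: "sep V E' A' B' \<and> X \<subseteq> A' \<and> Sx \<subseteq> B'"
        have U': "A' \<union> B' = V" using h unfolding sep_def by simp
        have s: "sep V E (A \<inter> A') (B \<union> {x} \<union> B')" unfolding sep_def
        proof (intro conjI allI impI)
          show "A \<inter> A' \<union> (B \<union> {x} \<union> B') = V" using U U' xy by blast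
        next
          fix u v assume hu: "E u v" "u \<in> A \<inter> A'" "u \<notin> B \<union> {x} \<union> B'"
          have "v \<in> A" using sA hu unfolding sep_def by blast
          moreover have "E' u v" using hu E'c xy by blast
          then have "v \<in> A'" using h hu unfolding sep_def by blast
          ultimately show "v \<in> A \<inter> A'" by blast
        qed
        have "X \<subseteq> A \<inter> A'" "Y \<subseteq> B \<union> {x} \<union> B'" using h AB by blast+
        then have "p \<le> card ((A \<inter> A') \<inter> (B \<union> {x} \<union> B'))" using H[rule_format, OF conjI[OF s conjI]] by blast
        also have "\<dots> \<le> card (A' \<inter> B')"
        proof (rule card_mono)
          show "finite (A' \<inter> B')" using U' finV by (meson finite_Int finite_subset sup_ge1)
          show "A \<inter> A' \<inter> (B \<union> {x} \<union> B') \<subseteq> A' \<inter> B'" using h unfolding Sx_def by blast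
        qed
        finally show "p \<le> card (A' \<inter> B')" .
      qed
      have H2: "\<forall>A' B'. sep V E' A' B' \<and> Sy \<subseteq> A' \<and> Y \<subseteq> B' \<longrightarrow> p \<le> card (A' \<inter> B')"
      proof (intro allI impI)
        fix A' B' assume h: "sep V E' A' B' \<and> Sy \<subseteq> A' \<and> Y \<subseteq> B'"
        have U': "A' \<union> B' = V" using h unfolding sep_def by simp
        have s: "sep V E (A \<union> {y} \<union> A') (B \<inter> B')" unfolding sep_def
        proof (intro conjI allI impI)
          show "A \<union> {y} \<union> A' \<union> B \<inter> B' = V" using U U' yB by blast
        next
          fix u v assume hu: "E u v" "u \<in> A \<union> {y} \<union> A'" "u \<notin> B \<inter> B'"
          show "v \<in> A \<union> {y} \<union> A'"
          proof (cases "u \<in> A \<union> {y}")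
            case True
            show ?thesis
            proof (cases "u \<in> B")
              case False
              then show ?thesis using sB hu True unfolding sep_def by blast
            next
              case uB: True
              then have uS: "u \<in> Sy" using \<open>u \<in> A \<union> {y}\<close> unfolding Sy_def by blast
              then have uA': "u \<in> A'" "u \<notin> B'" using h hu uB by blast+
              show ?thesis
              proof (cases "E' u v")
                case True then show ?thesis using h uA' unfolding sep_def by blast
              next
                case False
                have "u \<noteq> x" using uB xy by blast
                then have "u = y \<and> v = x" using E'c[of u v] hu(1) False by simp
                then show ?thesis using xy by blast
              qed
            qed
          next
            case False
            have uV: "u \<in> V" using EV[OF hu(1)] by simp
            have uA: "u \<in> A'" using hu(2) False by blast
            have uB: "u \<in> B" using uV U False by blast
            have uB': "u \<notin> B'" using hu(3) uB by blast
            have "u \<noteq> x" "u \<noteq> y" using False xy by auto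
            then have "E' u v" using E'c hu(1) by simp
            then show ?thesis using h uA uB' unfolding sep_def by blast
          qed
        qed
        have "X \<subseteq> A \<union> {y} \<union> A'" "Y \<subseteq> B \<inter> B'" using h AB by blast+
        then have "p \<le> card ((A \<union> {y} \<union> A') \<inter> (B \<inter> B'))" using H[rule_format, OF conjI[OF s conjI]] by blast
        also have "\<dots> \<le> card (A' \<inter> B')"
        proof (rule card_mono)
          show "finite (A' \<inter> B')" using U' finV by (meson finite_Int finite_subset sup_ge1)
          show "(A \<union> {y} \<union> A') \<inter> (B \<inter> B') \<subseteq> A' \<inter> B'" using h unfolding Sy_def by blast
        qed
        finally show "p \<le> card (A' \<inter> B')" .
      qed
      obtain P1 where P1: "linkset V E' X Sx P1" "card P1 = p" using less.IH[OF lt refl g' X SxV(1) H1] by blast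
      obtain P2 where P2: "linkset V E' Sy Y P2" "card P2 = p" using less.IH[OF lt refl g' SxV(2) Y H2] by blast
      have P1': "linkset V E X Sx P1" using linkset_mono[OF P1(1)] E'E by blast
      have P2': "linkset V E Sy Y P2" using linkset_mono[OF P2(1)] E'E by blast
      show ?thesis
        using combine[OF g sA sB xy(2,3) yB xy(4) xy(1) P1'[unfolded Sx_def] P1(2) P2'[unfolded Sy_def] P2(2) AB(2,3,4)] .
    qed
  qed
qed

lemma menger:
  assumes "graph V E" "X \<subseteq> V" "Y \<subseteq> V"
    "\<forall>A B. sep V E A B \<and> X \<subseteq> A \<and> Y \<subseteq> B \<longrightarrow> p \<le> card (A \<inter> B)"
  shows "disjoint_paths V E p X Y"
  using menger_n[OF refl assms] linkset_dp by metis

lemma clip: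
  assumes g: "graph V E" and c: "chain V E m L R" and ij: "i \<le> j" "j \<le> Suc m"
    and s: "sep V E A B" and XA: "L i \<inter> R i \<subseteq> A" and YB: "L j \<inter> R j \<subseteq> B"
  shows "sep V E ((A \<inter> L j) \<union> L i) ((B \<union> R j) \<inter> R i)
    \<and> L i \<subseteq> (A \<inter> L j) \<union> L i \<and> (A \<inter> L j) \<union> L i \<subseteq> L j
    \<and> R j \<subseteq> (B \<union> R j) \<inter> R i \<and> (B \<union> R j) \<inter> R i \<subseteq> R i
    \<and> ((A \<inter> L j) \<union> L i) \<inter> ((B \<union> R j) \<inter> R i) \<subseteq> A \<inter> B"
proof -
  have i: "i \<le> Suc m" using ij by simp
  have si: "sep V E (L i) (R i)" and sj: "sep V E (L j) (R j)"
    using c ij i unfolding chain_def by blast+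
  have mo: "L i \<subseteq> L j" "R j \<subseteq> R i" using chain_mono[OF c ij] by auto
  have Ui: "L i \<union> R i = V" and Uj: "L j \<union> R j = V" and U: "A \<union> B = V"
    using si sj s unfolding sep_def by auto
  have sep': "sep V E ((A \<inter> L j) \<union> L i) ((B \<union> R j) \<inter> R i)" unfolding sep_def
  proof (intro conjI allI impI)
    show "A \<inter> L j \<union> L i \<union> (B \<union> R j) \<inter> R i = V" using Ui Uj U mo by blast
  next
    fix u v assume h: "E u v" "u \<in> A \<inter> L j \<union> L i" "u \<notin> (B \<union> R j) \<inter> R i"
    have uV: "u \<in> V" using g h unfolding graph_def by blast
    show "v \<in> A \<inter> L j \<union> L i"
    proof (cases "u \<in> R i")
      case False
      then have "u \<in> L i" using h uV Ui by blast
      then have "v \<in> L i" using si h False unfolding sep_def by blast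
      then show ?thesis by blast
    next
      case True
      then have u: "u \<notin> B" "u \<notin> R j" using h by auto
      have "u \<in> A" "u \<in> L j" using uV u U Uj by auto
      then have "v \<in> A" "v \<in> L j" using s sj h u unfolding sep_def by blast+
      then show ?thesis by blast
    qed
  qed
  moreover have "((A \<inter> L j) \<union> L i) \<inter> ((B \<union> R j) \<inter> R i) \<subseteq> A \<inter> B"
    using XA YB mo by blast
  ultimately show ?thesis using mo by blast
qed

lemma sep_triv1: "sep V E {} V" unfolding sep_def by auto
lemma sep_triv2: "graph V E \<Longrightarrow> sep V E V {}" unfolding sep_def graph_def by auto

lemma arith_win:
  fixes t M D :: nat
  assumes "t < M"
  shows "1 + 2 * t * D + D \<le> 1 + 2 * M * D"
proof -
  have "2 * t * D + D \<le> 2 * t * D + 2 * D" by simp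
  also have "\<dots> = 2 * Suc t * D" by simp
  also have "\<dots> \<le> 2 * M * D" using assms by (intro mult_le_mono) auto
  finally show ?thesis by simp
qed

lemma arith_step:
  fixes j D :: nat
  assumes "0 < j"
  shows "1 + 2 * j * D = 1 + 2 * (j - 1) * D + 2 * D"
proof -
  obtain j' where "j = Suc j'" using assms by (cases j) auto
  then show ?thesis by (simp add: algebra_simps)
qed

lemma dichotomy:
  assumes g: "graph V E" and pd: "path_decomp V E B" and pr: "proper_pd B"
    and iw: "interior_width_le B w" and ad: "adhesion_le B a"
    and D: "1 \<le> D" and M: "1 \<le> M" and len: "2 + 2 * M * D \<le> length B"
  shows "(\<exists>B'. path_decomp V E B' \<and> proper_pd B' \<and> p_linked V E B' a \<and> interior_width_le B' w \<and> length B' = D + 2)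
     \<or> (0 < a \<and> (\<exists>B'. path_decomp V E B' \<and> proper_pd B' \<and> interior_width_le B' (3 * D * (w + 1))
          \<and> adhesion_le B' (a - 1) \<and> length B' = M + 1))"
proof -
  define N where "N = length B"
  define m where "m = N - 1"
  define L where "L = Lb B"
  define R where "R = Rb B"
  have N2: "2 \<le> N" using len unfolding N_def by simp
  have c: "chain V E m L R" unfolding m_def N_def L_def R_def by (rule pd_chain[OF g pd])
  have p: "pv m L R" unfolding m_def N_def L_def R_def by (rule pd_pv[OF pd pr]) (use N2 N_def in simp)
  have mN: "Suc m = N" using N2 unfolding m_def by simp
  have finV: "finite V" using g unfolding graph_def by simp
  have mlen: "1 + 2 * M * D \<le> m" using len unfolding m_def N_def by simp
  have adh: "card (L k \<inter> R k) \<le> a" if "0 < k" "k \<le> m" for k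
  proof -
    have "L k \<inter> R k = B ! (k - 1) \<inter> B ! k" unfolding L_def R_def
      by (rule pd_adh[OF pd]) (use that mN N_def in auto)
    moreover have "k - 1 + 1 < length B" using that mN N_def by simp
    then have "card (B ! (k - 1) \<inter> B ! (k - 1 + 1)) \<le> a"
      using ad unfolding adhesion_le_def by blast
    ultimately show ?thesis using that by simp
  qed
  have bagw: "card (L (Suc k) \<inter> R k) \<le> w + 1" if "0 < k" "k < m" for k
  proof -
    have "L (Suc k) \<inter> R k = B ! k" unfolding L_def R_def
      by (rule pd_bag[OF pd]) (use that mN N_def in auto)
    moreover have "card (B ! k) \<le> w + 1" using iw that mN N_def unfolding interior_width_le_def by auto
    ultimately show ?thesis by simp
  qed
  define s where "s t = 1 + 2 * t * D" for t
  have swin: "s t + D \<le> m" if "t < M" for t using arith_win[OF that, of D] mlen unfolding s_def by simp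
  define good where "good t \<longleftrightarrow> (\<exists>A' B'. sep V E A' B' \<and> L (s t) \<subseteq> A' \<and> A' \<subseteq> L (s t + D)
       \<and> R (s t + D) \<subseteq> B' \<and> B' \<subseteq> R (s t) \<and> card (A' \<inter> B') < a)" for t
  show ?thesis
  proof (cases "\<forall>t<M. good t")
    case False
    then obtain t where t: "t < M" "\<not> good t" by blast
    define s0 where "s0 = s t"
    define e0 where "e0 = s0 + D"
    have s0: "1 \<le> s0" "e0 \<le> m" using swin[OF t(1)] unfolding s0_def e0_def s_def by auto
    have adhA: "card (L k \<inter> R k) = a" if "s0 \<le> k" "k \<le> e0" for k
    proof -
      have "card (L k \<inter> R k) \<le> a" using adh[of k] that s0 by auto
      moreover have "\<not> card (L k \<inter> R k) < a"
      proof
        assume "card (L k \<inter> R k) < a"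
        moreover have "sep V E (L k) (R k)" using c that s0 unfolding chain_def by auto
        moreover have "L s0 \<subseteq> L k \<and> R k \<subseteq> R s0" using chain_mono[OF c, of s0 k] that s0 by auto
        moreover have "L k \<subseteq> L e0 \<and> R e0 \<subseteq> R k" using chain_mono[OF c, of k e0] that s0 by auto
        ultimately have "good t" unfolding good_def s0_def[symmetric] e0_def[symmetric] by blast
        then show False using t by blast
      qed
      ultimately show ?thesis by simp
    qed
    define X where "X = L s0 \<inter> R s0"
    define Y where "Y = L e0 \<inter> R e0"
    have "s0 \<le> Suc m" "e0 \<le> Suc m" using s0 e0_def by auto
    then have XV: "X \<subseteq> V" "Y \<subseteq> V" unfolding X_def Y_def using chain_sub_V[OF c] by blast+
    have mh: "\<forall>A B. sep V E A B \<and> X \<subseteq> A \<and> Y \<subseteq> B \<longrightarrow> a \<le> card (A \<inter> B)"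
    proof (intro allI impI)
      fix A B assume h: "sep V E A B \<and> X \<subseteq> A \<and> Y \<subseteq> B"
      show "a \<le> card (A \<inter> B)"
      proof (rule ccontr)
        assume lt: "\<not> a \<le> card (A \<inter> B)"
        have cl: "sep V E ((A \<inter> L e0) \<union> L s0) ((B \<union> R e0) \<inter> R s0)
          \<and> L s0 \<subseteq> (A \<inter> L e0) \<union> L s0 \<and> (A \<inter> L e0) \<union> L s0 \<subseteq> L e0
          \<and> R e0 \<subseteq> (B \<union> R e0) \<inter> R s0 \<and> (B \<union> R e0) \<inter> R s0 \<subseteq> R s0
          \<and> ((A \<inter> L e0) \<union> L s0) \<inter> ((B \<union> R e0) \<inter> R s0) \<subseteq> A \<inter> B"
          by (rule clip[OF g c]) (use h s0 X_def Y_def e0_def in auto)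
        have "finite (A \<inter> B)" using h finV unfolding sep_def by (meson finite_Int finite_subset sup_ge1)
        then have "card (((A \<inter> L e0) \<union> L s0) \<inter> ((B \<union> R e0) \<inter> R s0)) \<le> card (A \<inter> B)"
          using cl by (intro card_mono) auto
        then have "good t" unfolding good_def s0_def[symmetric] e0_def[symmetric]
          using cl lt by (intro exI[of _ "(A \<inter> L e0) \<union> L s0"] exI[of _ "(B \<union> R e0) \<inter> R s0"]) auto
        then show False using t by blast
      qed
    qed
    have dp: "disjoint_paths V E a X Y" by (rule menger[OF g XV mh])
    define \<sigma> where "\<sigma> j = (if j = 0 then 0 else if j \<le> D + 1 then s0 + j - 1 else Suc m)" for j
    have \<sigma>m: "\<sigma> j \<le> Suc m" for j unfolding \<sigma>_def using s0 e0_def by auto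
    have br: "chain V E (D + 1) (\<lambda>j. L (\<sigma> j)) (\<lambda>j. R (\<sigma> j)) \<and> pv (D + 1) (\<lambda>j. L (\<sigma> j)) (\<lambda>j. R (\<sigma> j))"
    proof (rule bracket[OF c p, where lo = \<sigma> and hi = \<sigma>])
      show "\<forall>j\<le>Suc (D + 1). sep V E (L (\<sigma> j)) (R (\<sigma> j)) \<and> \<sigma> j \<le> \<sigma> j \<and> \<sigma> j \<le> Suc m \<and>
        L (\<sigma> j) \<subseteq> L (\<sigma> j) \<and> L (\<sigma> j) \<subseteq> L (\<sigma> j) \<and> R (\<sigma> j) \<subseteq> R (\<sigma> j) \<and> R (\<sigma> j) \<subseteq> R (\<sigma> j)"
        using c \<sigma>m unfolding chain_def by auto
      show "\<forall>j\<le>D + 1. \<sigma> j < \<sigma> (Suc j)" unfolding \<sigma>_def using s0 e0_def by auto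
      show "\<sigma> 0 = 0" "\<sigma> (Suc (D + 1)) = Suc m" unfolding \<sigma>_def by auto
    qed (simp_all add: \<sigma>_def)
    define B' where "B' = bags (D + 1) (\<lambda>j. L (\<sigma> j)) (\<lambda>j. R (\<sigma> j))"
    have lenB': "length B' = D + 2" unfolding B'_def by simp
    have Ls: "Lset B' i = L (\<sigma> i) \<inter> R (\<sigma> i)" if "0 < i" "i \<le> D + 1" for i
      unfolding B'_def using chain_Lset[OF br[THEN conjunct1] that] by simp
    have pl: "p_linked V E B' a" unfolding p_linked_def
    proof (intro conjI allI impI)
      show "2 \<le> length B'" using lenB' by simp
    next
      fix i assume i: "0 < i \<and> i < length B'"
      then have "Lset B' i = L (\<sigma> i) \<inter> R (\<sigma> i)" using Ls lenB' by simp
      moreover have "s0 \<le> \<sigma> i" "\<sigma> i \<le> e0" using i lenB' unfolding \<sigma>_def e0_def by auto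
      ultimately show "card (Lset B' i) = a" using adhA by simp
    next
      have "Rset B' 0 = L (\<sigma> 1) \<inter> R (\<sigma> 1)" unfolding B'_def
        by (rule chain_Rset0[OF br[THEN conjunct1]]) simp
      moreover have "Lset B' (length B' - 1) = L (\<sigma> (D + 1)) \<inter> R (\<sigma> (D + 1))" using Ls lenB' by simp
      moreover have "\<sigma> 1 = s0" "\<sigma> (D + 1) = e0" unfolding \<sigma>_def e0_def by auto
      ultimately show "disjoint_paths V E a (Rset B' 0) (Lset B' (length B' - 1))"
        using dp unfolding X_def Y_def by simp
    qed
    have iwB': "interior_width_le B' w" unfolding interior_width_le_def
    proof (intro allI impI)
      fix i assume i: "0 < i \<and> i + 1 < length B'"
      have "B' ! i = L (\<sigma> (Suc i)) \<inter> R (\<sigma> i)" unfolding B'_def using i lenB' by simp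
      moreover have "\<sigma> (Suc i) = Suc (s0 + i - 1)" "\<sigma> i = s0 + i - 1" unfolding \<sigma>_def using i lenB' s0 by auto
      moreover have "0 < s0 + i - 1" "s0 + i - 1 < m" using i lenB' s0 e0_def by auto
      ultimately show "card (B' ! i) \<le> w + 1" using bagw by simp
    qed
    have "path_decomp V E B'" unfolding B'_def by (rule chain_pd[OF g br[THEN conjunct1]])
    moreover have "proper_pd B'" unfolding B'_def by (rule chain_proper) (use br in auto)
    ultimately show ?thesis using pl iwB' lenB' by blast
  next
    case True
    define P where "P t AB \<longleftrightarrow> sep V E (fst AB) (snd AB) \<and> L (s t) \<subseteq> fst AB \<and> fst AB \<subseteq> L (s t + D)
       \<and> R (s t + D) \<subseteq> snd AB \<and> snd AB \<subseteq> R (s t) \<and> card (fst AB \<inter> snd AB) < a" for t AB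
    define F where "F t = (SOME AB. P t AB)" for t
    have FP: "P t (F t)" if "t < M" for t
    proof -
      have "\<exists>AB. P t AB" using True that unfolding good_def P_def by fastforce
      then show ?thesis unfolding F_def by (rule someI_ex)
    qed
    have apos: "0 < a" using FP[of 0] M unfolding P_def by auto
    define AA where "AA j = (if j = 0 then {} else if j \<le> M then fst (F (j - 1)) else V)" for j
    define BB where "BB j = (if j = 0 then V else if j \<le> M then snd (F (j - 1)) else {})" for j
    define lo where "lo j = (if j = 0 then 0 else if j \<le> M then s (j - 1) else Suc m)" for j
    define hi where "hi j = (if j = 0 then 0 else if j \<le> M then s (j - 1) + D else Suc m)" for j
    have L0: "L 0 = {}" "R 0 = V" "L (Suc m) = V" "R (Suc m) = {}" using c unfolding chain_def by auto
    have br: "chain V E M AA BB \<and> pv M AA BB"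
    proof (rule bracket[OF c p, where lo = lo and hi = hi])
      show "\<forall>j\<le>Suc M. sep V E (AA j) (BB j) \<and> lo j \<le> hi j \<and> hi j \<le> Suc m \<and>
        L (lo j) \<subseteq> AA j \<and> AA j \<subseteq> L (hi j) \<and> R (hi j) \<subseteq> BB j \<and> BB j \<subseteq> R (lo j)"
      proof (intro allI impI)
        fix j assume j: "j \<le> Suc M"
        show "sep V E (AA j) (BB j) \<and> lo j \<le> hi j \<and> hi j \<le> Suc m \<and>
          L (lo j) \<subseteq> AA j \<and> AA j \<subseteq> L (hi j) \<and> R (hi j) \<subseteq> BB j \<and> BB j \<subseteq> R (lo j)"
        proof (cases "j = 0")
          case True then show ?thesis unfolding AA_def BB_def lo_def hi_def using L0 sep_triv1 by simp
        next
          case False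
          show ?thesis
          proof (cases "j \<le> M")
            case True
            have "j - 1 < M" using True False by simp
            then have "P (j - 1) (F (j - 1))" "s (j - 1) + D \<le> m" using FP swin by auto
            then show ?thesis unfolding AA_def BB_def lo_def hi_def P_def using True False by simp
          next
            case F2: False
            then show ?thesis unfolding AA_def BB_def lo_def hi_def using L0 sep_triv2[OF g] False by simp
          qed
        qed
      qed
      show "\<forall>j\<le>M. hi j < lo (Suc j)"
      proof (intro allI impI)
        fix j assume j: "j \<le> M"
        show "hi j < lo (Suc j)"
        proof (cases "j = 0")
          case True then show ?thesis unfolding hi_def lo_def s_def using M by simp
        next
          case False
          show ?thesis
          proof (cases "j = M")
            case True
            have "s (j - 1) + D \<le> m" using swin False j by simp
            then show ?thesis unfolding hi_def lo_def using True False by simp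
          next
            case F2: False
            have "s j = s (j - 1) + 2 * D" unfolding s_def using arith_step[of j D] False by simp
            then show ?thesis unfolding hi_def lo_def using F2 False j D by simp
          qed
        qed
      qed
      show "lo 0 = 0" "hi 0 = 0" "lo (Suc M) = Suc m" "hi (Suc M) = Suc m" unfolding lo_def hi_def by auto
    qed
    define B' where "B' = bags M AA BB"
    have lenB': "length B' = M + 1" unfolding B'_def by simp
    have adB': "adhesion_le B' (a - 1)" unfolding adhesion_le_def
    proof (intro allI impI)
      fix i assume i: "i + 1 < length B'"
      have "Lset B' (i + 1) = AA (i + 1) \<inter> BB (i + 1)" unfolding B'_def
        by (rule chain_Lset[OF br[THEN conjunct1]]) (use i lenB' in auto)
      moreover have "Lset B' (i + 1) = B' ! i \<inter> B' ! (i + 1)" unfolding Lset_def by simp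
      moreover have "AA (i + 1) \<inter> BB (i + 1) = fst (F i) \<inter> snd (F i)" unfolding AA_def BB_def using i lenB' by simp
      moreover have "card (fst (F i) \<inter> snd (F i)) < a" using FP[of i] i lenB' unfolding P_def by simp
      ultimately show "card (B' ! i \<inter> B' ! (i + 1)) \<le> a - 1" by simp
    qed
    have iwB': "interior_width_le B' (3 * D * (w + 1))" unfolding interior_width_le_def
    proof (intro allI impI)
      fix i assume i: "0 < i \<and> i + 1 < length B'"
      have iM: "i < M" using i lenB' by simp
      have "B' ! i = AA (Suc i) \<inter> BB i" unfolding B'_def using i lenB' by simp
      also have "\<dots> = fst (F i) \<inter> snd (F (i - 1))" unfolding AA_def BB_def using i iM by simp
      also have "\<dots> \<subseteq> L (s i + D) \<inter> R (s (i - 1))"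
      proof -
        have "i - 1 < M" using iM by simp
        then show ?thesis using FP[of i] FP[of "i - 1"] iM unfolding P_def by auto
      qed
      finally have sub: "B' ! i \<subseteq> L (s i + D) \<inter> R (s (i - 1))" .
      have si: "s i = s (i - 1) + 2 * D" unfolding s_def using arith_step[of i D] i by simp
      have e: "s i + D \<le> m" using swin[OF iM] .
      have "card (L (s i + D) \<inter> R (s (i - 1))) \<le> (s i + D - s (i - 1)) * (w + 1)"
      proof (rule card_cover[OF c g])
        show "s (i - 1) < s i + D" using si D by simp
        show "s i + D \<le> Suc m" using e by simp
        show "\<forall>k. s (i - 1) \<le> k \<and> k < s i + D \<longrightarrow> card (L (Suc k) \<inter> R k) \<le> w + 1"
          using bagw e unfolding s_def by auto
      qed
      moreover have "s i + D - s (i - 1) = 3 * D" using si by simp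
      moreover have "card (B' ! i) \<le> card (L (s i + D) \<inter> R (s (i - 1)))"
        by (rule card_mono[OF _ sub]) (use chain_sub_V[OF c, of "s i + D"] e finV in \<open>meson finite_Int finite_subset le_SucI\<close>)
      ultimately show "card (B' ! i) \<le> 3 * D * (w + 1) + 1" by (simp add: mult.assoc)
    qed
    have "path_decomp V E B'" unfolding B'_def by (rule chain_pd[OF g br[THEN conjunct1]])
    moreover have "proper_pd B'" unfolding B'_def by (rule chain_proper) (use br in auto)
    ultimately show ?thesis using apos adB' iwB' lenB' by blast
  qed
qed

lemma main_ind:
  fixes f :: "nat \<Rightarrow> nat"
  shows "\<forall>w. \<exists>w0 n0 :: nat. \<forall>V E B.
    graph V E \<and> path_decomp V E B \<and> proper_pd B \<and> interior_width_le B w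
      \<and> adhesion_le B a \<and> n0 \<le> length B \<longrightarrow>
    (\<exists>w' p B'. w' \<le> w0 \<and> p \<le> a \<and> path_decomp V E B' \<and> proper_pd B'
       \<and> p_linked V E B' p \<and> interior_width_le B' w' \<and> f w' \<le> length B')"
proof (induction a)
  case 0
  show ?case
  proof
    fix w
    define D where "D = Suc (f w)"
    show "\<exists>w0 n0 :: nat. \<forall>V E B.
      graph V E \<and> path_decomp V E B \<and> proper_pd B \<and> interior_width_le B w
        \<and> adhesion_le B 0 \<and> n0 \<le> length B \<longrightarrow>
      (\<exists>w' p B'. w' \<le> w0 \<and> p \<le> 0 \<and> path_decomp V E B' \<and> proper_pd B'
         \<and> p_linked V E B' p \<and> interior_width_le B' w' \<and> f w' \<le> length B')"
    proof (rule exI[of _ w], rule exI[of _ "2 + 2 * 1 * D"], intro allI impI)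
      fix V E B
      assume h: "graph V E \<and> path_decomp V E B \<and> proper_pd B \<and> interior_width_le B w
        \<and> adhesion_le B 0 \<and> 2 + 2 * 1 * D \<le> length B"
      have "(\<exists>B'. path_decomp V E B' \<and> proper_pd B' \<and> p_linked V E B' 0 \<and> interior_width_le B' w \<and> length B' = D + 2)
       \<or> (0 < (0::nat) \<and> (\<exists>B'. path_decomp V E B' \<and> proper_pd B' \<and> interior_width_le B' (3 * D * (w + 1))
          \<and> adhesion_le B' (0 - 1) \<and> length B' = 1 + 1))"
        by (rule dichotomy) (use h D_def in auto)
      then obtain B' where "path_decomp V E B'" "proper_pd B'" "p_linked V E B' 0" "interior_width_le B' w" "length B' = D + 2"
        by auto
      then show "\<exists>w' p B'. w' \<le> w \<and> p \<le> 0 \<and> path_decomp V E B' \<and> proper_pd B'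
         \<and> p_linked V E B' p \<and> interior_width_le B' w' \<and> f w' \<le> length B'"
        using D_def by (intro exI[of _ w] exI[of _ 0] exI[of _ B']) auto
    qed
  qed
next
  case (Suc a)
  show ?case
  proof
    fix w
    define D where "D = Suc (f w)"
    define w2 where "w2 = 3 * D * (w + 1)"
    obtain w0' n0' where IH: "\<forall>V E B.
      graph V E \<and> path_decomp V E B \<and> proper_pd B \<and> interior_width_le B w2
        \<and> adhesion_le B a \<and> n0' \<le> length B \<longrightarrow>
      (\<exists>w' p B'. w' \<le> w0' \<and> p \<le> a \<and> path_decomp V E B' \<and> proper_pd B'
         \<and> p_linked V E B' p \<and> interior_width_le B' w' \<and> f w' \<le> length B')"
      using Suc.IH by blast
    define M where "M = Suc n0'"
    show "\<exists>w0 n0 :: nat. \<forall>V E B.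
      graph V E \<and> path_decomp V E B \<and> proper_pd B \<and> interior_width_le B w
        \<and> adhesion_le B (Suc a) \<and> n0 \<le> length B \<longrightarrow>
      (\<exists>w' p B'. w' \<le> w0 \<and> p \<le> Suc a \<and> path_decomp V E B' \<and> proper_pd B'
         \<and> p_linked V E B' p \<and> interior_width_le B' w' \<and> f w' \<le> length B')"
    proof (rule exI[of _ "max w w0'"], rule exI[of _ "2 + 2 * M * D"], intro allI impI)
      fix V E B
      assume h: "graph V E \<and> path_decomp V E B \<and> proper_pd B \<and> interior_width_le B w
        \<and> adhesion_le B (Suc a) \<and> 2 + 2 * M * D \<le> length B"
      have "(\<exists>B'. path_decomp V E B' \<and> proper_pd B' \<and> p_linked V E B' (Suc a) \<and> interior_width_le B' w \<and> length B' = D + 2)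
       \<or> (0 < Suc a \<and> (\<exists>B'. path_decomp V E B' \<and> proper_pd B' \<and> interior_width_le B' (3 * D * (w + 1))
          \<and> adhesion_le B' (Suc a - 1) \<and> length B' = M + 1))"
        by (rule dichotomy) (use h D_def M_def in auto)
      then show "\<exists>w' p B'. w' \<le> max w w0' \<and> p \<le> Suc a \<and> path_decomp V E B' \<and> proper_pd B'
         \<and> p_linked V E B' p \<and> interior_width_le B' w' \<and> f w' \<le> length B'"
      proof
        assume "\<exists>B'. path_decomp V E B' \<and> proper_pd B' \<and> p_linked V E B' (Suc a) \<and> interior_width_le B' w \<and> length B' = D + 2"
        then obtain B' where "path_decomp V E B'" "proper_pd B'" "p_linked V E B' (Suc a)" "interior_width_le B' w" "length B' = D + 2"
          by blast
        then show ?thesis using D_def by (intro exI[of _ w] exI[of _ "Suc a"] exI[of _ B']) auto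
      next
        assume "0 < Suc a \<and> (\<exists>B'. path_decomp V E B' \<and> proper_pd B' \<and> interior_width_le B' (3 * D * (w + 1))
          \<and> adhesion_le B' (Suc a - 1) \<and> length B' = M + 1)"
        then obtain B' where B': "path_decomp V E B'" "proper_pd B'" "interior_width_le B' w2"
          "adhesion_le B' a" "length B' = M + 1" unfolding w2_def by auto
        have "n0' \<le> length B'" using B'(5) M_def by simp
        then obtain w' p B'' where r: "w' \<le> w0'" "p \<le> a" "path_decomp V E B''" "proper_pd B''"
          "p_linked V E B'' p" "interior_width_le B'' w'" "f w' \<le> length B''"
          using IH h B' by blast
        then show ?thesis by (intro exI[of _ w'] exI[of _ p] exI[of _ B'']) auto
      qed
    qed
  qed
qed

theorem lemma3p6:
  fixes a w :: nat and f :: "nat \<Rightarrow> nat"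
  assumes "mono f"
  shows "\<exists>w0 n0 :: nat. \<forall>V E B.
    graph V E \<and> path_decomp V E B \<and> proper_pd B \<and> interior_width_le B w
      \<and> adhesion_le B a \<and> n0 \<le> length B \<longrightarrow>
    (\<exists>w' p B'. w' \<le> w0 \<and> p \<le> a \<and> path_decomp V E B' \<and> proper_pd B'
       \<and> p_linked V E B' p \<and> interior_width_le B' w' \<and> f w' \<le> length B')"
  using main_ind[of a f] by blast

end
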